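(* For every finite forest $\mathcal{F}$ with at least one edge, the non-cover complex $\mathcal{NC}(\mathcal{F})$ is either contractible or homotopy equivalent to a sphere $\mathbb{S}^d$ for some $d\ge -1$ (with the convention $\mathbb{S}^{-1}=\emptyset$).
   Context: For a finite simple graph $H$, the non-cover complex $\mathcal{NC}(H)$ is the simplicial complex whose simplices are the subsets $S\subseteq V(H)$ such that $V(H)\setminus S$ contains both endpoints of some edge of $H$. Homotopy types refer to geometric realizations. *)

theory Defs
  imports "HOL-Analysis.Analysis"
begin

definition simple_graph :: "'a set \<Rightarrow> 'a set set \<Rightarrow> bool" where
  "simple_graph V E \<longleftrightarrow> finite V \<and> (\<forall>e\<in>E. e \<subseteq> V \<and> card e = 2)"

definition is_cycle :: "'a set set \<Rightarrow> 'a list \<Rightarrow> bool" where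
  "is_cycle E cs \<longleftrightarrow> length cs \<ge> 3 \<and> distinct cs \<and>
     (\<forall>i < length cs - 1. {cs ! i, cs ! (i+1)} \<in> E) \<and> {last cs, hd cs} \<in> E"

definition forest :: "'a set \<Rightarrow> 'a set set \<Rightarrow> bool" where
  "forest V E \<longleftrightarrow> simple_graph V E \<and> (\<nexists>cs. is_cycle E cs)"

definition non_cover_complex :: "'a set \<Rightarrow> 'a set set \<Rightarrow> 'a set set" where
  "non_cover_complex V E = {S. S \<subseteq> V \<and> (\<exists>e\<in>E. e \<subseteq> V - S)}"

text \<open>Geometric realization of a simplicial complex K on finite vertex set V,
  as a subspace of the function space 'a \<Rightarrow> real (product topology): all convex
  combinations of vertices whose support is a simplex of K.\<close>
definition geom_realization :: "'a set \<Rightarrow> 'a set set \<Rightarrow> ('a \<Rightarrow> real) set" where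
  "geom_realization V K = {f. (\<forall>v. 0 \<le> f v) \<and> (\<forall>v. v \<notin> V \<longrightarrow> f v = 0) \<and>
       (\<Sum>v\<in>V. f v) = 1 \<and> {v\<in>V. f v \<noteq> 0} \<in> K}"

text \<open>The d-sphere S^d (d \<ge> -1) as the unit sphere of R^(d+1), embedded in nat \<Rightarrow> real
  on coordinates 0..d; S^(-1) is empty.\<close>
definition std_sphere :: "int \<Rightarrow> (nat \<Rightarrow> real) set" where
  "std_sphere d = {x. (\<forall>i. int i > d \<longrightarrow> x i = 0) \<and> (\<Sum>i\<in>{i. int i \<le> d}. (x i)\<^sup>2) = 1}"

end

theory Submission
  imports Defs
begin


lemma cont_eval: "continuous_map (top_of_set (S::('a\<Rightarrow>real) set)) euclideanreal (\<lambda>f. f v)"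
proof -
  have "continuous_map (euclidean::('a\<Rightarrow>real) topology) euclideanreal (\<lambda>f. f v)"
    by (metis continuous_map_product_projection euclidean_product_topology UNIV_I)
  then show ?thesis by (rule continuous_map_from_subtopology)
qed

lemma cont_into_fun:
  fixes h :: "'b \<Rightarrow> ('a\<Rightarrow>real)"
  assumes "\<And>x. x \<in> topspace X \<Longrightarrow> h x \<in> S" "\<And>v. continuous_map X euclideanreal (\<lambda>x. h x v)"
  shows "continuous_map X (top_of_set S) h"
proof -
  have "continuous_map X (product_topology (\<lambda>i. euclideanreal) UNIV) h"
    using assms(2) by (simp add: continuous_map_componentwise_UNIV)
  then have "continuous_map X euclidean h" by (simp add: euclidean_product_topology)
  then show ?thesis using assms(1) by (auto simp: continuous_map_in_subtopology)
qed

lemma starlike_contractible: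
  fixes S :: "('a\<Rightarrow>real) set"
  assumes "a \<in> S" "\<And>f t. f\<in>S \<Longrightarrow> 0\<le>t \<Longrightarrow> t\<le>1 \<Longrightarrow> (\<lambda>v. (1-t)*f v + t*a v) \<in> S"
  shows "contractible_space (top_of_set S)"
  unfolding contractible_space_def homotopic_with_def
proof (intro exI conjI)
  let ?h = "\<lambda>(t::real,f::'a\<Rightarrow>real). (\<lambda>v. (1-t)*f v + t*a v)"
  show "continuous_map (prod_topology (top_of_set {0..1}) (top_of_set S)) (top_of_set S) ?h"
  proof (rule cont_into_fun)
    fix x assume "x \<in> topspace (prod_topology (top_of_set {0..1::real}) (top_of_set S))"
    then show "?h x \<in> S" using assms(2) by (auto simp: case_prod_beta)
  next
    fix v
    have e: "continuous_map (prod_topology (top_of_set {0..1::real}) (top_of_set S)) euclideanreal (\<lambda>x. snd x v)"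
      using continuous_map_compose[OF continuous_map_snd cont_eval] unfolding o_def .
    have f: "continuous_map (prod_topology (top_of_set {0..1::real}) (top_of_set S)) euclideanreal (\<lambda>x. fst x)"
      using continuous_map_compose[OF continuous_map_fst continuous_map_from_subtopology[OF continuous_map_id]] unfolding o_def id_def .
    show "continuous_map (prod_topology (top_of_set {0..1}) (top_of_set S)) euclideanreal (\<lambda>x. ?h x v)"
      unfolding case_prod_beta by (intro continuous_intros e f)
  qed
qed auto

definition R :: "'a set \<Rightarrow> 'a set set \<Rightarrow> ('a \<Rightarrow> real) set" where
  "R V E = {f. (\<forall>v. 0 \<le> f v) \<and> (\<forall>v. v \<notin> V \<longrightarrow> f v = 0) \<and> (\<Sum>v\<in>V. f v) = 1 \<and>
     (\<exists>e\<in>E. e \<subseteq> V \<and> (\<forall>v\<in>e. f v = 0))}"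

lemma supp_aux: "(e \<subseteq> V - {v\<in>V. f v \<noteq> 0}) \<longleftrightarrow> (e \<subseteq> V \<and> (\<forall>v\<in>e. f v = (0::real)))"
  by blast

lemma real_char: "geom_realization V (non_cover_complex V E) = R V E"
  unfolding geom_realization_def non_cover_complex_def R_def mem_Collect_eq supp_aux
  by (intro Collect_cong) blast

lemma R_I: "(\<forall>v. 0 \<le> f v) \<Longrightarrow> (\<forall>v. v\<notin>V \<longrightarrow> f v = 0) \<Longrightarrow> (\<Sum>v\<in>V. f v) = 1 \<Longrightarrow> e\<in>E \<Longrightarrow> e \<subseteq> V \<Longrightarrow> (\<forall>v\<in>e. f v = 0) \<Longrightarrow> f \<in> R V E"
  unfolding R_def by blast

lemma R_D: "f \<in> R V E \<Longrightarrow> 0 \<le> f v" "f \<in> R V E \<Longrightarrow> v \<notin> V \<Longrightarrow> f v = 0" "f \<in> R V E \<Longrightarrow> (\<Sum>v\<in>V. f v) = 1"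
  unfolding R_def by blast+

lemma R_E: "f \<in> R V E \<Longrightarrow> (\<And>e. e\<in>E \<Longrightarrow> e \<subseteq> V \<Longrightarrow> (\<forall>v\<in>e. f v = 0) \<Longrightarrow> P) \<Longrightarrow> P"
  unfolding R_def by blast

lemma R_empty: "R V {} = {}" by (simp add: R_def)

lemma contr_emptyedge:
  assumes "{} \<in> E"
  shows "contractible_space (top_of_set (R V E))"
proof (cases "R V E = {}")
  case True then show ?thesis by simp
next
  case False
  then obtain a where a: "a \<in> R V E" by blast
  show ?thesis
  proof (rule starlike_contractible[OF a])
    fix f and t :: real assume f: "f \<in> R V E" and t: "0 \<le> t" "t \<le> 1"
    have s: "(\<Sum>v\<in>V. (1 - t) * f v + t * a v) = (1-t) * (\<Sum>v\<in>V. f v) + t * (\<Sum>v\<in>V. a v)"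
      by (simp add: sum.distrib sum_distrib_left)
    show "(\<lambda>v. (1 - t) * f v + t * a v) \<in> R V E"
      using f a t assms unfolding R_def by (auto simp: s intro!: add_nonneg_nonneg)
  qed
qed

lemma contr_cone:
  assumes "u \<in> V" "\<forall>e\<in>E. u \<notin> e" "E \<noteq> {}" "finite V" "\<forall>e\<in>E. e \<subseteq> V"
  shows "contractible_space (top_of_set (R V E))"
proof -
  define a where "a = (\<lambda>v. if v = u then 1 else (0::real))"
  obtain e0 where e0: "e0 \<in> E" using assms by blast
  have sa: "(\<Sum>v\<in>V. a v) = 1" using assms(1,4) by (simp add: a_def)
  show ?thesis
  proof (rule starlike_contractible)
    have "\<forall>v\<in>e0. a v = 0" using assms(2) e0 by (auto simp: a_def)
    then show "a \<in> R V E" unfolding R_def using assms(1,5) e0 sa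
      by (auto simp: a_def)
  next
    fix f and t :: real assume f: "f \<in> R V E" and t: "0 \<le> t" "t \<le> 1"
    have s: "(\<Sum>v\<in>V. (1 - t) * f v + t * a v) = (1-t) * (\<Sum>v\<in>V. f v) + t * (\<Sum>v\<in>V. a v)"
      by (simp add: sum.distrib sum_distrib_left)
    from f obtain e where e: "e \<in> E" "e \<subseteq> V" "\<forall>v\<in>e. f v = 0" unfolding R_def by blast
    have z: "\<forall>v\<in>e. (1 - t) * f v + t * a v = 0" using e assms(2) by (auto simp: a_def)
    show "(\<lambda>v. (1 - t) * f v + t * a v) \<in> R V E"
    proof (rule R_I[OF _ _ _ e(1,2) z])
      show "\<forall>v. 0 \<le> (1 - t) * f v + t * a v" using R_D(1)[OF f] t by (simp add: a_def)
      show "\<forall>v. v \<notin> V \<longrightarrow> (1 - t) * f v + t * a v = 0" using R_D(2)[OF f] assms(1) by (simp add: a_def)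
      show "(\<Sum>v\<in>V. (1 - t) * f v + t * a v) = 1" using R_D(3)[OF f] sa s by simp
    qed
  qed
qed

lemma R_remove_sup:
  assumes "e1 \<in> E" "e2 \<in> E" "e1 \<subseteq> e2"  "e1 \<noteq> e2"
  shows "R V E = R V (E - {e2})"
proof
  show "R V E \<subseteq> R V (E - {e2})"
  proof
    fix f assume "f \<in> R V E"
    then obtain e where e: "e \<in> E" "e \<subseteq> V" "\<forall>v\<in>e. f v = 0" and f: "(\<forall>v. 0 \<le> f v) \<and> (\<forall>v. v \<notin> V \<longrightarrow> f v = 0) \<and> (\<Sum>v\<in>V. f v) = 1"
      unfolding R_def by blast
    show "f \<in> R V (E - {e2})"
    proof (cases "e = e2")
      case True
      then have "e1 \<in> E - {e2}" "e1 \<subseteq> V" "\<forall>v\<in>e1. f v = 0" using assms e by auto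
      then show ?thesis using f unfolding R_def by blast
    next
      case False
      then have "e \<in> E - {e2}" using e by simp
      then show ?thesis using f e unfolding R_def by blast
    qed
  qed
  show "R V (E - {e2}) \<subseteq> R V E" unfolding R_def by blast
qed



lemma dom_heq:
  assumes fin: "finite V" and lu: "l \<noteq> u" "l \<in> V" "u \<in> V" and dom: "\<forall>e\<in>E. l \<in> e \<longrightarrow> u \<in> e"
  shows "top_of_set (R V E) homotopy_equivalent_space top_of_set (R (V - {u}) ((\<lambda>e. e - {u}) ` E))"
proof -
  define h where "h = (\<lambda>(t::real, f::'a\<Rightarrow>real). \<lambda>v. f v + t * f u * ((if v = l then 1 else 0) - (if v = u then 1 else 0)))"
  define r where "r = (\<lambda>f. h (1, f))"
  have hu: "h (t, f) u = (1 - t) * f u" for t f using lu by (simp add: h_def algebra_simps)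
  have hsum: "(\<Sum>v\<in>V. h (t,f) v) = (\<Sum>v\<in>V. f v)" for t f
  proof -
    have "(\<Sum>v\<in>V. h (t,f) v) = (\<Sum>v\<in>V. f v) + t * f u * ((\<Sum>v\<in>V. (if v = l then 1 else 0)) - (\<Sum>v\<in>V. (if v = u then 1 else 0)))"
      unfolding h_def by (simp add: sum.distrib sum_distrib_left sum_subtractf algebra_simps)
    also have "\<dots> = (\<Sum>v\<in>V. f v)" using lu fin by simp
    finally show ?thesis .
  qed
  have hmem: "h (t, f) \<in> R V E \<and> (\<forall>e. (\<forall>v\<in>e. f v = 0) \<longrightarrow> e \<in> E \<longrightarrow> (\<forall>v\<in>e. h (t,f) v = 0))"
    if f: "f \<in> R V E" and t: "0 \<le> t" "t \<le> 1" for f t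
  proof -
    have z: "\<forall>v\<in>e. h (t,f) v = 0" if "\<forall>v\<in>e. f v = 0" "e \<in> E" for e
    proof (cases "f u = 0")
      case True then show ?thesis using that by (simp add: h_def)
    next
      case False
      then have "u \<notin> e" using that by auto
      then have "l \<notin> e" using dom that by auto
      then show ?thesis using that \<open>u \<notin> e\<close> by (auto simp: h_def)
    qed
    have nn: "\<forall>v. 0 \<le> h (t,f) v"
    proof
      fix v
      have a: "0 \<le> f v" "0 \<le> f u" using R_D(1)[OF f] by auto
      have b: "t * f u \<le> f u" using a t by (simp add: mult_left_le_one_le)
      show "0 \<le> h (t,f) v" using a b t unfolding h_def
        by (auto simp: algebra_simps)
    qed
    have off: "\<forall>v. v \<notin> V \<longrightarrow> h (t,f) v = 0" using R_D(2)[OF f] lu unfolding h_def by auto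
    from f obtain e where e: "e \<in> E" "e \<subseteq> V" "\<forall>v\<in>e. f v = 0" by (rule R_E)
    have "h (t, f) \<in> R V E"
      by (rule R_I[OF nn off _ e(1,2) z[OF e(3) e(1)]]) (use hsum R_D(3)[OF f] in simp)
    then show ?thesis using z by blast
  qed
  have cont_h: "continuous_map (prod_topology (top_of_set {0..1}) (top_of_set (R V E))) (top_of_set (R V E)) h"
  proof (rule cont_into_fun)
    fix x assume "x \<in> topspace (prod_topology (top_of_set {0..1::real}) (top_of_set (R V E)))"
    then show "h x \<in> R V E" using hmem by (cases x) auto
  next
    fix v
    have e: "continuous_map (prod_topology (top_of_set {0..1::real}) (top_of_set (R V E))) euclideanreal (\<lambda>x. snd x w)" for w
      using continuous_map_compose[OF continuous_map_snd cont_eval] unfolding o_def .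
    have f: "continuous_map (prod_topology (top_of_set {0..1::real}) (top_of_set (R V E))) euclideanreal (\<lambda>x. fst x)"
      using continuous_map_compose[OF continuous_map_fst continuous_map_from_subtopology[OF continuous_map_id]] unfolding o_def id_def .
    show "continuous_map (prod_topology (top_of_set {0..1}) (top_of_set (R V E))) euclideanreal (\<lambda>x. h x v)"
      unfolding h_def case_prod_beta by (intro continuous_intros e f)
  qed
  define V' where "V' = V - {u}"
  define E' where "E' = (\<lambda>e. e - {u}) ` E"
  have sub: "R V' E' \<subseteq> R V E"
  proof
    fix f assume f: "f \<in> R V' E'"
    then have fu: "f u = 0" unfolding R_def V'_def by auto
    have s: "(\<Sum>v\<in>V. f v) = (\<Sum>v\<in>V'. f v)" unfolding V'_def using fin lu fu
      by (metis add_0 sum.remove)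
    from f obtain e where e: "e \<in> E" "\<forall>v\<in>e - {u}. f v = 0" "e - {u} \<subseteq> V'" unfolding R_def E'_def by blast
    then have "\<forall>v\<in>e. f v = 0" "e \<subseteq> V" using fu lu unfolding V'_def by auto
    then show "f \<in> R V E" using f s e(1) unfolding R_def V'_def by auto
  qed
  have rmem: "r f \<in> R V' E'" if f: "f \<in> R V E" for f
  proof -
    have m: "h (1,f) \<in> R V E" and z: "\<forall>e. (\<forall>v\<in>e. f v = 0) \<longrightarrow> e \<in> E \<longrightarrow> (\<forall>v\<in>e. h (1,f) v = 0)"
      using hmem[OF f, of 1] by auto
    have hu1: "h (1,f) u = 0" using hu by simp
    have s: "(\<Sum>v\<in>V. h (1,f) v) = (\<Sum>v\<in>V'. h (1,f) v)" unfolding V'_def using fin lu hu1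
      by (metis add_0 sum.remove)
    from f obtain e where e: "e \<in> E" "e \<subseteq> V" "\<forall>v\<in>e. f v = 0" unfolding R_def by blast
    have "e - {u} \<in> E'" "e - {u} \<subseteq> V'" "\<forall>v\<in>e - {u}. h (1,f) v = 0"
      using e z unfolding E'_def V'_def by auto
    then show ?thesis using m s hu1 unfolding r_def R_def V'_def by auto
  qed
  have "top_of_set (R V E) homotopy_equivalent_space top_of_set (R V' E')"
  proof (rule deformation_retract_imp_homotopy_equivalent_space)
    show "homotopic_with (\<lambda>x. True) (top_of_set (R V E)) (top_of_set (R V E)) r id"
      unfolding homotopic_with_sym[of _ _ _ r]
      unfolding homotopic_with_def
      by (intro exI[of _ h] conjI cont_h) (auto simp: h_def r_def)
    show "retraction_maps (top_of_set (R V E)) (top_of_set (R V' E')) r id"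
      unfolding retraction_maps_def
    proof (intro conjI ballI)
      have "continuous_map (top_of_set (R V E)) (top_of_set (R V E)) r"
      proof -
        have p: "continuous_map (top_of_set (R V E)) (prod_topology (top_of_set {0..1::real}) (top_of_set (R V E))) (\<lambda>f. (1,f))"
          unfolding continuous_map_paired by (simp add: continuous_map_const)
        show ?thesis using continuous_map_compose[OF p cont_h] unfolding r_def o_def .
      qed
      then show "continuous_map (top_of_set (R V E)) (top_of_set (R V' E')) r"
        using rmem by (auto simp: continuous_map_in_subtopology)
      show "continuous_map (top_of_set (R V' E')) (top_of_set (R V E)) id"
        using sub by (auto simp: continuous_map_from_subtopology continuous_map_in_subtopology)
      fix x assume "x \<in> topspace (top_of_set (R V' E'))"
      then have "x u = 0" unfolding R_def V'_def by auto
      then show "r (id x) = x" by (simp add: r_def h_def)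
    qed
  qed
  then show ?thesis unfolding V'_def E'_def .
qed



lemma two_edge_back:
  assumes "\<forall>e\<in>E. finite e \<and> card e \<le> 2" "{a,b} \<in> (\<lambda>e. e - {u}) ` E" "a \<noteq> b"
  shows "{a,b} \<in> E"
proof -
  from assms(2) obtain e where e: "e \<in> E" "{a,b} = e - {u}" by blast
  have "u \<notin> e"
  proof
    assume ue: "u \<in> e"
    have "u \<noteq> a" "u \<noteq> b" using e(2) by (metis Diff_iff insertI1 insert_commute singletonI)+
    then have "card {a,b,u} = 3" using assms(3) by auto
    moreover have "{a,b,u} \<subseteq> e" using e(2) ue by auto
    ultimately have "3 \<le> card e" using assms(1) e(1) by (metis card_mono)
    then show False using assms(1) e(1) by auto
  qed
  then show ?thesis using e by auto
qed

lemma cyc_pres: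
  assumes "\<forall>e\<in>E. finite e \<and> card e \<le> 2" "is_cycle ((\<lambda>e. e - {u}) ` E) cs"
  shows "is_cycle E cs"
proof -
  have L: "length cs \<ge> 3" "distinct cs" using assms(2) unfolding is_cycle_def by auto
  have "\<forall>i < length cs - 1. {cs ! i, cs ! (i+1)} \<in> E"
  proof (intro allI impI)
    fix i assume i: "i < length cs - 1"
    have "cs ! i \<noteq> cs ! (i+1)" using L i by (simp add: nth_eq_iff_index_eq)
    then show "{cs ! i, cs ! (i+1)} \<in> E" using two_edge_back[OF assms(1)] assms(2) i unfolding is_cycle_def by blast
  qed
  moreover have "{last cs, hd cs} \<in> E"
  proof -
    have "last cs = cs ! (length cs - 1)" "hd cs = cs ! 0" proof -
      have "cs \<noteq> []" using L by auto
      then show "last cs = cs ! (length cs - 1)" "hd cs = cs ! 0" by (simp_all add: last_conv_nth hd_conv_nth)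
    qed
    moreover have "cs ! (length cs - 1) \<noteq> cs ! 0" using L by (subst nth_eq_iff_index_eq) auto
    ultimately have "last cs \<noteq> hd cs" by simp
    then show ?thesis using two_edge_back[OF assms(1)] assms(2) unfolding is_cycle_def by blast
  qed
  ultimately show ?thesis using L unfolding is_cycle_def by auto
qed

lemma leaf_exists:
  assumes fin: "finite V" and EV: "\<forall>e\<in>E. e \<subseteq> V \<and> card e \<le> 2" and nc: "\<not>(\<exists>cs. is_cycle E cs)"
    and nsub: "\<not>(\<exists>e1\<in>E. \<exists>e2\<in>E. e1 \<subseteq> e2 \<and> e1 \<noteq> e2)"
    and two: "\<exists>e\<in>E. card e = 2"
  shows "\<exists>l u. l \<noteq> u \<and> l \<in> V \<and> u \<in> V \<and> (\<forall>e\<in>E. l \<in> e \<longrightarrow> u \<in> e)"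
proof -
  define P where "P = {p. distinct p \<and> set p \<subseteq> V \<and> 2 \<le> length p \<and> (\<forall>i<length p - 1. {p!i, p!Suc i} \<in> E)}"
  have Pfin: "finite P"
  proof (rule finite_subset)
    show "P \<subseteq> {p. set p \<subseteq> V \<and> length p \<le> card V}"
      unfolding P_def using fin by (auto simp: card_mono distinct_card[symmetric])
    show "finite {p. set p \<subseteq> V \<and> length p \<le> card V}" using fin by (rule finite_lists_length_le)
  qed
  from two obtain e0 where e0: "e0 \<in> E" "card e0 = 2" by blast
  then obtain a b where ab: "e0 = {a,b}" "a \<noteq> b" by (meson card_2_iff)
  have "[a,b] \<in> P" unfolding P_def using ab e0 EV by auto
  then have Pne: "P \<noteq> {}" by blast
  define m where "m = Max (length ` P)"
  have "m \<in> length ` P" unfolding m_def using Pfin Pne by (intro Max_in) auto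
  then obtain p where p: "p \<in> P" "length p = m" by blast
  have pmax: "length q \<le> m" if "q \<in> P" for q using Pfin that unfolding m_def by auto
  have pd: "distinct p" "set p \<subseteq> V" "2 \<le> length p" "\<forall>i<length p - 1. {p!i, p!Suc i} \<in> E"
    using p(1) unfolding P_def by auto
  define l where "l = p ! 0"
  define u where "u = p ! 1"
  have lu: "l \<noteq> u" using pd unfolding l_def u_def by (subst nth_eq_iff_index_eq) auto
  have luV: "l \<in> V" "u \<in> V" using pd unfolding l_def u_def by (auto intro!: nth_mem[THEN subsetD[OF pd(2)]])
  have luE: "{l,u} \<in> E" using pd unfolding l_def u_def by (metis One_nat_def Suc_1 Suc_le_lessD diff_Suc_1 zero_less_diff)
  have "\<forall>e\<in>E. l \<in> e \<longrightarrow> u \<in> e"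
  proof (intro ballI impI, rule ccontr)
    fix e assume e: "e \<in> E" "l \<in> e" "u \<notin> e"
    have fe: "finite e" using e EV fin finite_subset by blast
    show False
    proof (cases "e = {l}")
      case True
      then have "e \<subseteq> {l,u}" "e \<noteq> {l,u}" using lu by auto
      then show ?thesis using nsub e(1) luE by blast
    next
      case False
      then obtain y where y: "y \<in> e" "y \<noteq> l" using e by blast
      have "{l,y} \<subseteq> e" using e y by auto
      moreover have "card {l,y} = 2" using y by auto
      moreover have "card e \<le> 2" using EV e by blast
      ultimately have ey: "e = {l,y}" using fe by (metis card_subset_eq le_antisym card_mono)
      have yu: "y \<noteq> u" using y e by auto
      show False
      proof (cases "y \<in> set p")
        case False
        have "y # p \<in> P" unfolding P_def
        proof (intro CollectI conjI)
          show "distinct (y # p)" using False pd by simp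
          show "set (y # p) \<subseteq> V" using pd y e EV by auto
          show "2 \<le> length (y # p)" using pd by simp
          show "\<forall>i<length (y # p) - 1. {(y # p) ! i, (y # p) ! Suc i} \<in> E"
          proof (intro allI impI)
            fix i assume i: "i < length (y # p) - 1"
            show "{(y # p) ! i, (y # p) ! Suc i} \<in> E"
            proof (cases i)
              case 0
              then show ?thesis using e ey unfolding l_def by (simp add: insert_commute)
            next
              case (Suc k)
              then show ?thesis using pd(4) i by simp
            qed
          qed
        qed
        then show False using pmax p by fastforce
      next
        case True
        then obtain j where j: "j < length p" "p ! j = y" by (meson in_set_conv_nth)
        have j2: "2 \<le> j"
        proof -
          have "j \<noteq> 0"
          proof assume "j = 0" then show False using j y unfolding l_def by simp qed
          moreover have "j \<noteq> 1"
          proof assume "j = 1" then show False using j yu unfolding u_def by simp qed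
          ultimately show ?thesis by arith
        qed
        define cs where "cs = take (Suc j) p"
        have "is_cycle E cs" unfolding is_cycle_def
        proof (intro conjI)
          show "3 \<le> length cs" using j j2 unfolding cs_def by simp
          show "distinct cs" using pd unfolding cs_def by simp
          show "\<forall>i<length cs - 1. {cs ! i, cs ! (i + 1)} \<in> E"
            using pd(4) j unfolding cs_def by auto
          have "p \<noteq> []" using j by auto
          then have "cs \<noteq> []" unfolding cs_def by simp
          have lc: "length cs = Suc j" using j unfolding cs_def by simp
          have "last cs = cs ! j" using \<open>cs \<noteq> []\<close> lc by (simp add: last_conv_nth)
          also have "\<dots> = p ! j" unfolding cs_def by simp
          finally have "last cs = p ! j" .
          moreover have "hd cs = p ! 0" using \<open>cs \<noteq> []\<close> unfolding cs_def by (simp add: hd_conv_nth)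
          ultimately have "last cs = p ! j" "hd cs = p ! 0" by auto
          then show "{last cs, hd cs} \<in> E" using j e ey unfolding l_def by (simp add: insert_commute)
        qed
        then show False using nc by blast
      qed
    qed
  qed
  then show ?thesis using lu luV by blast
qed



definition bd :: "'a set \<Rightarrow> ('a\<Rightarrow>real) set" where
  "bd V = {f. (\<forall>v. 0 \<le> f v) \<and> (\<forall>v. v \<notin> V \<longrightarrow> f v = 0) \<and> (\<Sum>v\<in>V. f v) = 1 \<and> (\<exists>v\<in>V. f v = 0)}"

lemma cont_Max:
  assumes "finite A" "A \<noteq> {}" "\<And>a. a\<in>A \<Longrightarrow> continuous_map X euclideanreal (f a)"
  shows "continuous_map X euclideanreal (\<lambda>x. Max ((\<lambda>a. f a x) ` A))"
  using assms
proof (induction A rule: finite_ne_induct)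
  case (singleton a)
  then show ?case by simp
next
  case (insert a A)
  have "(\<lambda>x. Max ((\<lambda>a. f a x) ` insert a A)) = (\<lambda>x. max (f a x) (Max ((\<lambda>a. f a x) ` A)))"
    using insert by (simp add: Max_insert)
  then show ?case using insert by (simp add: continuous_map_real_max)
qed

lemma sphere_eq:
  assumes "n \<ge> 2"
  shows "std_sphere (int n - 2) = {y. (\<forall>i. n - 1 \<le> i \<longrightarrow> y i = 0) \<and> (\<Sum>i<n-1. (y i)\<^sup>2) = 1}"
proof -
  have a: "{i::nat. int i \<le> int n - 2} = {..<n-1}" using assms by auto
  have b: "(int n - 2 < int i) \<longleftrightarrow> (n - 1 \<le> i)" for i using assms by auto
  show ?thesis unfolding std_sphere_def a b by simp
qed

lemma bd_homeo:
  fixes V :: "'a set" and \<sigma> :: "nat \<Rightarrow> 'a"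
  assumes fin: "finite V" and n2: "n \<ge> 2" and bij: "bij_betw \<sigma> {..<n} V"
  shows "top_of_set (bd V) homeomorphic_space top_of_set (std_sphere (int n - 2))"
proof -
  define m where "m = n - 1"
  have nm: "n = Suc m" and m1: "m \<ge> 1" using n2 unfolding m_def by auto
  define \<tau> where "\<tau> = the_inv_into {..<n} \<sigma>"
  have inj: "inj_on \<sigma> {..<n}" and img: "\<sigma> ` {..<n} = V" using bij by (auto simp: bij_betw_def)
  have \<tau>\<sigma>: "\<tau> (\<sigma> i) = i" if "i < n" for i using that inj unfolding \<tau>_def by (simp add: the_inv_into_f_f)
  have \<sigma>\<tau>: "\<sigma> (\<tau> v) = v" "\<tau> v < n" if "v \<in> V" for v
    using that img inj unfolding \<tau>_def by (auto simp: f_the_inv_into_f the_inv_into_into[of \<sigma> "{..<n}" v "{..<n}", simplified])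
  have \<sigma>V: "\<sigma> i \<in> V" if "i < n" for i using that img by auto
  have sumV: "(\<Sum>v\<in>V. g v) = (\<Sum>i<n. g (\<sigma> i))" for g :: "'a \<Rightarrow> real"
    using sum.reindex_bij_betw[OF bij, of g] by simp
  have nr: "real n > 0" using n2 by simp
  define S where "S = std_sphere (int n - 2)"
  have S: "S = {y. (\<forall>i. m \<le> i \<longrightarrow> y i = 0) \<and> (\<Sum>i<m. (y i)\<^sup>2) = 1}"
    unfolding S_def m_def using sphere_eq[OF n2] by simp
  define w where "w = (\<lambda>(x::'a\<Rightarrow>real) i. x (\<sigma> i) - 1 / real n)"
  define N where "N = (\<lambda>x. sqrt (\<Sum>i<m. (w x i)\<^sup>2))"
  define F where "F = (\<lambda>x i. if i < m then w x i / N x else 0)"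
  define Ly where "Ly = (\<lambda>(y::nat\<Rightarrow>real) i. if i < m then y i else - (\<Sum>j<m. y j))"
  define M where "M = (\<lambda>y. Max ((\<lambda>i. - Ly y i) ` {..<n}))"
  define G where "G = (\<lambda>y v. if v \<in> V then 1 / real n + Ly y (\<tau> v) / (real n * M y) else 0)"
  have bdD: "(\<forall>v. 0 \<le> x v) \<and> (\<forall>v. v \<notin> V \<longrightarrow> x v = 0) \<and> (\<Sum>i<n. x (\<sigma> i)) = 1 \<and> (\<exists>i<n. x (\<sigma> i) = 0)"
    if xbd: "x \<in> bd V" for x
  proof -
    obtain v where "v \<in> V" "x v = 0" using xbd unfolding bd_def by blast
    then have "\<exists>i<n. x (\<sigma> i) = 0" using \<sigma>\<tau> by metis
    then show ?thesis using xbd sumV unfolding bd_def by auto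
  qed
  have sum_split: "(\<Sum>i<n. g i) = (\<Sum>i<m. g i) + g m" for g :: "nat \<Rightarrow> real" unfolding nm by simp
  have Npos: "N x > 0" if x: "x \<in> bd V" for x
  proof (rule ccontr)
    assume "\<not> N x > 0"
    moreover have "N x \<ge> 0" unfolding N_def by (simp add: sum_nonneg)
    ultimately have "N x = 0" by simp
    then have "(\<Sum>i<m. (w x i)\<^sup>2) = 0" unfolding N_def by simp
    then have "\<forall>i\<in>{..<m}. (w x i)\<^sup>2 = 0" by (subst sum_nonneg_eq_0_iff[symmetric]) auto
    then have xi: "\<forall>i<m. x (\<sigma> i) = 1 / real n" unfolding w_def by simp
    then have "(\<Sum>i<m. x (\<sigma> i)) = real m / real n" by simp
    moreover have "(\<Sum>i<n. x (\<sigma> i)) = 1" using bdD[OF x] by blast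
    ultimately have "x (\<sigma> m) = 1 - real m / real n" using sum_split[of "\<lambda>i. x (\<sigma> i)"] by simp
    also have "\<dots> = 1 / real n" using nr unfolding nm by (simp add: field_simps)
    finally have "\<forall>i<n. x (\<sigma> i) = 1 / real n" using xi nm less_Suc_eq by auto
    moreover obtain i where "i < n" "x (\<sigma> i) = 0" using bdD[OF x] by blast
    ultimately show False using nr by simp
  qed
  have Fmem: "F x \<in> S" if x: "x \<in> bd V" for x
  proof -
    have Np: "N x > 0" by (rule Npos[OF x])
    have N2: "(N x)\<^sup>2 = (\<Sum>i<m. (w x i)\<^sup>2)" unfolding N_def by (simp add: sum_nonneg)
    have "(\<Sum>i<m. (F x i)\<^sup>2) = (\<Sum>i<m. (w x i)\<^sup>2 / (N x)\<^sup>2)"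
      unfolding F_def by (simp add: power_divide)
    also have "\<dots> = (\<Sum>i<m. (w x i)\<^sup>2) / (N x)\<^sup>2" by (simp add: sum_divide_distrib)
    also have "\<dots> = 1" using Np by (simp add: N2[symmetric])
    finally show ?thesis unfolding S F_def by auto
  qed
  have Lysum: "(\<Sum>i<n. Ly y i) = 0" for y unfolding sum_split Ly_def by simp
  have Mprops: "M y > 0 \<and> (\<forall>i<n. - Ly y i \<le> M y) \<and> (\<exists>i<n. - Ly y i = M y)" if y: "y \<in> S" for y
  proof -
    have ys: "(\<Sum>i<m. (y i)\<^sup>2) = 1" using y unfolding S by blast
    have ex: "\<exists>i<m. y i \<noteq> 0"
    proof (rule ccontr)
      assume "\<not> (\<exists>i<m. y i \<noteq> 0)"
      then have "(\<Sum>i<m. (y i)\<^sup>2) = 0" by simp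
      then show False using ys by simp
    qed
    have neg: "\<exists>i<n. Ly y i < 0"
    proof (rule ccontr)
      assume "\<not> (\<exists>i<n. Ly y i < 0)"
      then have "\<forall>i\<in>{..<n}. 0 \<le> Ly y i" by (meson lessThan_iff not_less)
      then have "\<forall>i\<in>{..<n}. Ly y i = 0" using Lysum[of y] sum_nonneg_eq_0_iff[of "{..<n}" "Ly y"] by auto
      then have "\<forall>i<m. y i = 0"
      proof (intro allI impI)
        fix i assume "\<forall>i\<in>{..<n}. Ly y i = 0" "i < m"
        then have "Ly y i = 0" using nm by simp
        then show "y i = 0" using \<open>i < m\<close> unfolding Ly_def by simp
      qed
      then show False using ex by blast
    qed
    have fi: "finite ((\<lambda>i. - Ly y i) ` {..<n})" "(\<lambda>i. - Ly y i) ` {..<n} \<noteq> {}" using n2 by (auto simp: lessThan_empty_iff)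
    have le: "\<forall>i<n. - Ly y i \<le> M y" unfolding M_def using fi by auto
    have "M y \<in> (\<lambda>i. - Ly y i) ` {..<n}" unfolding M_def using fi by (rule Max_in)
    then have att: "\<exists>i<n. - Ly y i = M y" by auto
    obtain i where "i < n" "Ly y i < 0" using neg by blast
    then have "M y > 0" using le by force
    then show ?thesis using le att by blast
  qed
  have Gmem: "G y \<in> bd V" if y: "y \<in> S" for y
  proof -
    have Mp: "M y > 0" and le: "\<forall>i<n. - Ly y i \<le> M y" and att: "\<exists>i<n. - Ly y i = M y"
      using Mprops[OF y] by auto
    have nn: "0 \<le> G y v" for v
    proof (cases "v \<in> V")
      case True
      then have "- Ly y (\<tau> v) \<le> M y" using le \<sigma>\<tau> by blast
      then have "- Ly y (\<tau> v) / (real n * M y) \<le> M y / (real n * M y)"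
        using Mp nr by (intro divide_right_mono) auto
      also have "\<dots> = 1 / real n" using Mp by simp
      finally show ?thesis using True unfolding G_def by (simp add: minus_divide_left[symmetric])
    qed (simp add: G_def)
    have "(\<Sum>v\<in>V. G y v) = (\<Sum>i<n. 1 / real n + Ly y i / (real n * M y))"
      unfolding sumV G_def using \<sigma>V \<tau>\<sigma> by (intro sum.cong) auto
    also have "\<dots> = 1 + (\<Sum>i<n. Ly y i) / (real n * M y)"
      using nr by (simp add: sum.distrib sum_divide_distrib)
    also have "\<dots> = 1" using Lysum by simp
    finally have sm: "(\<Sum>v\<in>V. G y v) = 1" .
    obtain i where i: "i < n" "- Ly y i = M y" using att by blast
    have "G y (\<sigma> i) = 1 / real n + Ly y i / (real n * M y)" using i \<sigma>V \<tau>\<sigma> unfolding G_def by simp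
    also have "\<dots> = 0" using i(2)[symmetric] Mp nr by (simp add: field_simps)
    finally have "\<exists>v\<in>V. G y v = 0" using \<sigma>V i by blast
    then show ?thesis using nn sm unfolding bd_def G_def by auto
  qed
  have GF: "G (F x) = x" if x: "x \<in> bd V" for x
  proof -
    have Np: "N x > 0" by (rule Npos[OF x])
    have xb: "\<forall>v. 0 \<le> x v" "\<forall>v. v \<notin> V \<longrightarrow> x v = 0" "(\<Sum>i<n. x (\<sigma> i)) = 1" "\<exists>i<n. x (\<sigma> i) = 0"
      using bdD[OF x] by blast+
    have LyF: "Ly (F x) i = (x (\<sigma> i) - 1 / real n) / N x" if i: "i < n" for i
    proof (cases "i < m")
      case True then show ?thesis unfolding Ly_def F_def w_def by simp
    next
      case False
      then have im: "i = m" using i nm by simp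
      have "(\<Sum>j<m. F x j) = (\<Sum>j<m. x (\<sigma> j) - 1 / real n) / N x"
        unfolding F_def w_def by (simp add: sum_divide_distrib)
      also have "(\<Sum>j<m. x (\<sigma> j) - 1 / real n) = (\<Sum>j<m. x (\<sigma> j)) - real m / real n"
        by (simp add: sum_subtractf)
      also have "(\<Sum>j<m. x (\<sigma> j)) = 1 - x (\<sigma> m)" using xb(3) sum_split[of "\<lambda>i. x (\<sigma> i)"] by simp
      finally have "(\<Sum>j<m. F x j) = (1 - x (\<sigma> m) - real m / real n) / N x" .
      moreover have "1 - real m / real n = 1 / real n" using nr unfolding nm by (simp add: field_simps)
      ultimately have "(\<Sum>j<m. F x j) = (1 / real n - x (\<sigma> m)) / N x" by (simp add: algebra_simps)
      moreover have "- ((1 / real n - x (\<sigma> m)) / N x) = (x (\<sigma> m) - 1 / real n) / N x"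
        by (metis minus_diff_eq minus_divide_left)
      ultimately show ?thesis unfolding Ly_def im by simp
    qed
    have MF: "M (F x) = (1 / real n) / N x"
      unfolding M_def
    proof (rule Max_eqI)
      show "finite ((\<lambda>i. - Ly (F x) i) ` {..<n})" by simp
      fix z assume "z \<in> (\<lambda>i. - Ly (F x) i) ` {..<n}"
      then obtain i where i: "i < n" "z = - Ly (F x) i" by blast
      then have "z = - ((x (\<sigma> i) - 1 / real n) / N x)" using LyF by simp
      then have "z = (1 / real n - x (\<sigma> i)) / N x" by (metis minus_diff_eq minus_divide_left)
      moreover have "1 / real n - x (\<sigma> i) \<le> 1 / real n" using xb(1) by simp
      ultimately show "z \<le> (1 / real n) / N x" using Np by (metis divide_right_mono less_imp_le)
    next
      obtain i where i: "i < n" "x (\<sigma> i) = 0" using xb(4) by blast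
      then have "- Ly (F x) i = - ((0 - 1 / real n) / N x)" using LyF by simp
      then have "- Ly (F x) i = (1 / real n) / N x" by (metis minus_diff_eq minus_divide_left diff_zero)
      then show "(1 / real n) / N x \<in> (\<lambda>i. - Ly (F x) i) ` {..<n}" using i by force
    qed
    show ?thesis
    proof
      fix v
      show "G (F x) v = x v"
      proof (cases "v \<in> V")
        case True
        have "G (F x) v = 1 / real n + ((x v - 1 / real n) / N x) / (real n * ((1 / real n) / N x))"
          unfolding G_def MF using True LyF[OF \<sigma>\<tau>(2)[OF True]] \<sigma>\<tau>(1)[OF True] by simp
        also have "\<dots> = x v" using Np nr by (simp add: field_simps)
        finally show ?thesis .
      next
        case False then show ?thesis using xb(2) unfolding G_def by simp
      qed
    qed
  qed
  have FG: "F (G y) = y" if y: "y \<in> S" for y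
  proof -
    have Mp: "M y > 0" using Mprops[OF y] by blast
    have ys: "(\<Sum>i<m. (y i)\<^sup>2) = 1" "\<forall>i. m \<le> i \<longrightarrow> y i = 0" using y unfolding S by blast+
    have wG: "w (G y) i = y i / (real n * M y)" if "i < m" for i
      using that \<sigma>V \<tau>\<sigma> nm unfolding w_def G_def Ly_def by simp
    have "(\<Sum>i<m. (w (G y) i)\<^sup>2) = (\<Sum>i<m. (y i)\<^sup>2) / (real n * M y)\<^sup>2"
      using wG by (simp add: power_divide sum_divide_distrib)
    then have "N (G y) = sqrt (1 / (real n * M y)\<^sup>2)" unfolding N_def using ys by simp
    also have "\<dots> = 1 / (real n * M y)" using Mp nr by (simp add: real_sqrt_divide)
    finally have NG: "N (G y) = 1 / (real n * M y)" .
    show ?thesis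
    proof
      fix i
      show "F (G y) i = y i"
      proof (cases "i < m")
        case True
        then show ?thesis unfolding F_def NG using wG[OF True] Mp nr by simp
      next
        case False then show ?thesis using ys unfolding F_def by simp
      qed
    qed
  qed
  have contF: "continuous_map (top_of_set (bd V)) (top_of_set S) F"
  proof (rule cont_into_fun)
    show "F x \<in> S" if "x \<in> topspace (top_of_set (bd V))" for x using that Fmem by simp
    fix i
    have ev: "continuous_map (top_of_set (bd V)) euclideanreal (\<lambda>x. x a)" for a by (rule cont_eval)
    have cw: "continuous_map (top_of_set (bd V)) euclideanreal (\<lambda>x. w x j)" for j
      unfolding w_def by (intro continuous_intros ev)
    have cN: "continuous_map (top_of_set (bd V)) euclideanreal N"
      unfolding N_def by (intro continuous_intros cw) auto
    show "continuous_map (top_of_set (bd V)) euclideanreal (\<lambda>x. F x i)"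
    proof (cases "i < m")
      case True
      have "continuous_map (top_of_set (bd V)) euclideanreal (\<lambda>x. w x i / N x)"
        using Npos by (intro continuous_map_real_divide cw cN) fastforce
      then show ?thesis unfolding F_def using True by simp
    next
      case False then show ?thesis unfolding F_def by simp
    qed
  qed
  have contG: "continuous_map (top_of_set S) (top_of_set (bd V)) G"
  proof (rule cont_into_fun)
    show "G y \<in> bd V" if "y \<in> topspace (top_of_set S)" for y using that Gmem by simp
    fix v
    have ev: "continuous_map (top_of_set S) euclideanreal (\<lambda>y. y a)" for a by (rule cont_eval)
    have cL: "continuous_map (top_of_set S) euclideanreal (\<lambda>y. Ly y k)" for k
    proof (cases "k < m")
      case True then show ?thesis unfolding Ly_def using ev[of k] by (simp del: continuous_map_subtopology_eu)
    next
      case False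
      have "continuous_map (top_of_set S) euclideanreal (\<lambda>y. - (\<Sum>j<m. y j))"
        by (intro continuous_intros ev) auto
      then show ?thesis using False unfolding Ly_def by simp
    qed
    have cM: "continuous_map (top_of_set S) euclideanreal M"
      unfolding M_def using n2 by (intro cont_Max continuous_intros cL) (auto simp: lessThan_empty_iff)
    show "continuous_map (top_of_set S) euclideanreal (\<lambda>y. G y v)"
    proof (cases "v \<in> V")
      case True
      have "continuous_map (top_of_set S) euclideanreal (\<lambda>y. 1 / real n + Ly y (\<tau> v) / (real n * M y))"
        using Mprops nr by (intro continuous_intros cL cM) fastforce
      then show ?thesis unfolding G_def using True by simp
    next
      case False then show ?thesis unfolding G_def by simp
    qed
  qed
  have "homeomorphic_maps (top_of_set (bd V)) (top_of_set S) F G"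
    unfolding homeomorphic_maps_def using contF contG GF FG by auto
  then show ?thesis unfolding S_def homeomorphic_space_def by blast
qed

lemma bdry_sphere:
  assumes fin: "finite V" and ne: "V \<noteq> {}"
  shows "top_of_set (bd V) homotopy_equivalent_space top_of_set (std_sphere (int (card V) - 2))"
proof (cases "card V = 1")
  case True
  then obtain a where a: "V = {a}" by (rule card_1_singletonE)
  have "bd V = {}" unfolding bd_def a by auto
  moreover have "std_sphere (int (card V) - 2) = {}" unfolding std_sphere_def True by simp
  ultimately show ?thesis
    by (simp add: homeomorphic_imp_homotopy_equivalent_space homeomorphic_empty_space_eq)
next
  case False
  moreover have "card V \<noteq> 0" using fin ne by simp
  ultimately have n2: "card V \<ge> 2" by linarith
  obtain \<sigma> where "bij_betw \<sigma> {0..<card V} V" using ex_bij_betw_nat_finite[OF fin] by blast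
  then have "bij_betw \<sigma> {..<card V} V" by (simp add: atLeast0LessThan)
  then show ?thesis using bd_homeo[OF fin n2] homeomorphic_imp_homotopy_equivalent_space by blast
qed



lemma R_singletons: "R V ((\<lambda>v. {v}) ` V) = bd V"
proof -
  have "(\<exists>e\<in>(\<lambda>v. {v}) ` V. e \<subseteq> V \<and> (\<forall>w\<in>e. f w = 0)) \<longleftrightarrow> (\<exists>v\<in>V. f v = (0::real))" for f :: "'a \<Rightarrow> real"
    by auto
  then show ?thesis unfolding R_def bd_def by simp
qed

definition G :: "('a\<Rightarrow>real) topology \<Rightarrow> bool" where
  "G X \<longleftrightarrow> contractible_space X \<or> (\<exists>d::int. d \<ge> -1 \<and> X homotopy_equivalent_space top_of_set (std_sphere d))"

lemma G_trans: "X homotopy_equivalent_space Y \<Longrightarrow> G Y \<Longrightarrow> G X"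
proof -
  assume XY: "X homotopy_equivalent_space Y" and GY: "G Y"
  show "G X"
  proof (cases "contractible_space Y")
    case True then show ?thesis unfolding G_def using homotopy_equivalent_space_contractibility[OF XY] by simp
  next
    case False
    then obtain d::int where "d \<ge> -1" "Y homotopy_equivalent_space top_of_set (std_sphere d)" using GY unfolding G_def by blast
    then show ?thesis unfolding G_def using homotopy_eqv_trans[OF XY] by blast
  qed
qed

lemma cyc_mono: "E' \<subseteq> E \<Longrightarrow> is_cycle E' cs \<Longrightarrow> is_cycle E cs"
  unfolding is_cycle_def by blast

lemma t1: "contractible_space (top_of_set ({}::('a\<Rightarrow>real) set))" by simp
lemma t2: "G (top_of_set (R V {}))" unfolding G_def R_empty using t1 by blast
lemma main_ind:
  "\<forall>V E. card V + card E = n \<longrightarrow> finite V \<longrightarrow> (\<forall>e\<in>E. e \<subseteq> V \<and> card e \<le> 2) \<longrightarrow> \<not>(\<exists>cs. is_cycle E cs)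
     \<longrightarrow> G (top_of_set (R V (E::'a set set)))"
proof (induction n rule: less_induct)
  case (less n)
  show ?case
  proof (intro allI impI)
    fix V and E :: "'a set set"
    assume n: "card V + card E = n" and fin: "finite V" and EV: "\<forall>e\<in>E. e \<subseteq> V \<and> card e \<le> 2"
      and nc: "\<not>(\<exists>cs. is_cycle E cs)"
    have IH: "\<And>V' E'. card V' + card E' < n \<Longrightarrow> finite V' \<Longrightarrow> (\<forall>e\<in>E'. e \<subseteq> V' \<and> card e \<le> 2) \<Longrightarrow> \<not>(\<exists>cs. is_cycle E' cs) \<Longrightarrow> G (top_of_set (R V' (E'::'a set set)))"
      using less.IH by blast
    have finE: "finite E" using fin EV by (meson Pow_iff finite_Pow_iff finite_subset subsetI)
    have fine: "\<forall>e\<in>E. finite e" using fin EV finite_subset by blast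
    show "G (top_of_set (R V E))"
    proof (cases "E = {}")
      case True then show ?thesis using t2 by simp
    next
      case Ene: False
      show ?thesis
      proof (cases "{} \<in> E")
        case True then show ?thesis using contr_emptyedge G_def by blast
      next
        case noemp: False
        show ?thesis
        proof (cases "\<exists>u\<in>V. \<forall>e\<in>E. u \<notin> e")
          case True
          then obtain u where "u \<in> V" "\<forall>e\<in>E. u \<notin> e" by blast
          then show ?thesis using contr_cone[of u V E] Ene fin EV G_def by blast
        next
          case cover: False
          show ?thesis
          proof (cases "\<exists>e1\<in>E. \<exists>e2\<in>E. e1 \<subseteq> e2 \<and> e1 \<noteq> e2")
            case True
            then obtain e1 e2 where e12: "e1 \<in> E" "e2 \<in> E" "e1 \<subseteq> e2" "e1 \<noteq> e2" by blast
            have cE: "card (E - {e2}) < card E" using finE e12 by (meson card_Diff1_less)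
            have ncE: "\<not>(\<exists>cs. is_cycle (E - {e2}) cs)" using nc cyc_mono[of "E - {e2}" E] by blast
            have EVE: "\<forall>e\<in>E - {e2}. e \<subseteq> V \<and> card e \<le> 2" using EV by blast
            have "card V + card (E - {e2}) < n" using n cE by linarith
            then have "G (top_of_set (R V (E - {e2})))" by (rule IH[OF _ fin EVE ncE])
            then show ?thesis using R_remove_sup[OF e12] by simp
          next
            case nsub: False
            show ?thesis
            proof (cases "\<exists>e\<in>E. card e = 2")
              case True
              obtain l u where lu: "l \<noteq> u" "l \<in> V" "u \<in> V" "\<forall>e\<in>E. l \<in> e \<longrightarrow> u \<in> e"
                using leaf_exists[OF fin EV nc nsub True] by blast
              define E' where "E' = (\<lambda>e. e - {u}) ` E"
              have c1: "card (V - {u}) < card V" using fin lu by (meson card_Diff1_less)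
              have c2: "card E' \<le> card E" unfolding E'_def using finE by (rule card_image_le)
              have EV': "\<forall>e\<in>E'. e \<subseteq> V - {u} \<and> card e \<le> 2"
              proof
                fix e' assume "e' \<in> E'"
                then obtain e where e: "e \<in> E" "e' = e - {u}" unfolding E'_def by blast
                have "card e' \<le> card e" unfolding e(2) by (rule card_Diff1_le)
                then show "e' \<subseteq> V - {u} \<and> card e' \<le> 2" using EV e by auto
              qed
              have nc': "\<not>(\<exists>cs. is_cycle E' cs)"
              proof
                assume "\<exists>cs. is_cycle E' cs"
                then obtain cs where "is_cycle E' cs" by blast
                moreover have "\<forall>e\<in>E. finite e \<and> card e \<le> 2" using EV fine by simp
                ultimately have "is_cycle E cs" using cyc_pres[of E u cs] unfolding E'_def by simp
                then show False using nc by blast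
              qed
              have "card (V - {u}) + card E' < n" using n c1 c2 by linarith
              moreover have "finite (V - {u})" using fin by simp
              ultimately have "G (top_of_set (R (V - {u}) E'))" by (rule IH[OF _ _ EV' nc'])
              then show ?thesis using G_trans[OF dom_heq[OF fin lu]] unfolding E'_def by simp
            next
              case False
              have sing: "\<forall>e\<in>E. \<exists>v\<in>V. e = {v}"
              proof
                fix e assume e: "e \<in> E"
                have "card e \<noteq> 0" using e noemp fine by auto
                moreover have "card e \<noteq> 2" using e False by blast
                moreover have "card e \<le> 2" "e \<subseteq> V" using EV e by blast+
                ultimately have "card e = 1" by linarith
                then obtain v where "e = {v}" by (rule card_1_singletonE)
                then show "\<exists>v\<in>V. e = {v}" using \<open>e \<subseteq> V\<close> by blast
              qed
              have "E = (\<lambda>v. {v}) ` V"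
              proof
                show "E \<subseteq> (\<lambda>v. {v}) ` V" using sing by blast
                show "(\<lambda>v. {v}) ` V \<subseteq> E"
                proof
                  fix x assume "x \<in> (\<lambda>v. {v}) ` V"
                  then obtain v where v: "v \<in> V" "x = {v}" by blast
                  then obtain e where e: "e \<in> E" "v \<in> e" using cover by blast
                  then obtain w where "e = {w}" using sing by blast
                  then have "e = x" using e v by simp
                  then show "x \<in> E" using e by simp
                qed
              qed
              then have RE: "R V E = bd V" by (simp add: R_singletons)
              have "V \<noteq> {}" using Ene \<open>E = (\<lambda>v. {v}) ` V\<close> by auto
              then have "card V \<ge> 1" using fin by (simp add: Suc_leI card_gt_0_iff)
              then show ?thesis unfolding G_def RE using bdry_sphere[OF fin \<open>V \<noteq> {}\<close>]
                by (intro disjI2 exI[of _ "int (card V) - 2"]) auto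
            qed
          qed
        qed
      qed
    qed
  qed
qed


theorem corollary4p3:
  fixes V :: "'a set" and E :: "'a set set"
  assumes "forest V E" and "E \<noteq> {}"
  shows "contractible_space (top_of_set (geom_realization V (non_cover_complex V E)))
         \<or> (\<exists>d::int. d \<ge> -1 \<and>
              top_of_set (geom_realization V (non_cover_complex V E))
                homotopy_equivalent_space top_of_set (std_sphere d))"
proof -
  have fin: "finite V" and EV: "\<forall>e\<in>E. e \<subseteq> V \<and> card e = 2" and nc: "\<not>(\<exists>cs. is_cycle E cs)"
    using assms(1) unfolding forest_def simple_graph_def by auto
  have EV2: "\<forall>e\<in>E. e \<subseteq> V \<and> card e \<le> 2" using EV by simp
  have "G (top_of_set (R V E))" using main_ind[of "card V + card E"] fin EV2 nc by blast
  then show ?thesis unfolding real_char G_def .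
qed

end
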